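(* There is an absolute constant $C>0$ such that the following holds. For all $\varepsilon\in(0,1)$, $\delta\in(0,1/2]$, and all $n,D\in\mathbb{N}$, there exists an $(\varepsilon,\delta)$-LNDP algorithm $\mathcal{A}$ on $n$-node graphs such that for every graph $G$ on node set $[n]$ with maximum degree at most $D$, having $m$ edges, \[ \mathbb{E}\big[|\mathcal{A}(G)-m|\big]\le C\,(D\sqrt{n}+n)\cdot\frac{\sqrt{\log(1/\delta)}}{\varepsilon}. \] (The algorithm is private for all graphs on $[n]$; only accuracy uses the degree bound.)
   Context: Graphs are simple and undirected on node set $[n]=\{1,\dots,n\}$; $N_i^G$ is the neighborhood of node $i$ in $G$ and $d_i=|N_i^G|$ its degree. Two graphs $G,G'$ on $[n]$ are node neighbors if they differ only in edges incident to a single node. Random variables $R_1,R_2$ on a common outcome space are $(\varepsilon,\delta)$-indistinguishable if for every measurable event $Y$, $\Pr[R_1\in Y]\le e^{\varepsilon}\Pr[R_2\in Y]+\delta$ and $\Pr[R_2\in Y]\le e^{\varepsilon}\Pr[R_1\in Y]+\delta$. An algorithm $\mathcal{A}$ on $n$-node graphs is (noninteractive) $(\varepsilon,\delta)$-LNDP if there exist a distribution over public random strings $\rho$, local randomizers $\mathcal{R}_{1,\rho},\dots,\mathcal{R}_{n,\rho}$ (randomized maps, run with independent internal randomness), and a postprocessing algorithm $\mathcal{P}$ such that $\mathcal{A}(G)=\mathcal{P}(\mathcal{R}_{1,\rho}(N_1^G),\dots,\mathcal{R}_{n,\rho}(N_n^G))$ with $\rho$ drawn from the public distribution, and for every fixed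 $\rho$ and every pair of node-neighboring graphs $G,G'$ on $[n]$ the vectors $(\mathcal{R}_{i,\rho}(N_i^G))_{i\in[n]}$ and $(\mathcal{R}_{i,\rho}(N_i^{G'}))_{i\in[n]}$ are $(\varepsilon,\delta)$-indistinguishable. *)

theory Defs
  imports "HOL-Probability.Probability"
begin

definition graph_on :: "nat \<Rightarrow> nat set set \<Rightarrow> bool" where
  "graph_on n E \<longleftrightarrow>
     (\<forall>e\<in>E. \<exists>u v. e = {u, v} \<and> u \<noteq> v \<and> u \<in> {1..n} \<and> v \<in> {1..n})"

definition nbhd :: "nat set set \<Rightarrow> nat \<Rightarrow> nat set" where
  "nbhd E i = {j. {i, j} \<in> E}"

definition degree :: "nat set set \<Rightarrow> nat \<Rightarrow> nat" where
  "degree E i = card (nbhd E i)"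

definition num_edges :: "nat set set \<Rightarrow> nat" where
  "num_edges E = card E"

definition max_degree_le :: "nat \<Rightarrow> nat set set \<Rightarrow> nat \<Rightarrow> bool" where
  "max_degree_le n E D \<longleftrightarrow> (\<forall>i\<in>{1..n}. degree E i \<le> D)"

definition node_neighbors :: "nat \<Rightarrow> nat set set \<Rightarrow> nat set set \<Rightarrow> bool" where
  "node_neighbors n E E' \<longleftrightarrow> graph_on n E \<and> graph_on n E' \<and>
     (\<exists>v\<in>{1..n}. \<forall>e. v \<notin> e \<longrightarrow> (e \<in> E \<longleftrightarrow> e \<in> E'))"

definition indist :: "real \<Rightarrow> real \<Rightarrow> 'a measure \<Rightarrow> 'a measure \<Rightarrow> bool" where
  "indist \<epsilon> \<delta> M1 M2 \<longleftrightarrow>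
     (\<forall>Y\<in>sets M1. measure M1 Y \<le> exp \<epsilon> * measure M2 Y + \<delta>
                 \<and> measure M2 Y \<le> exp \<epsilon> * measure M1 Y + \<delta>)"

text \<open>A noninteractive local algorithm on n-node graphs is represented by
  a distribution Rho of the public random string (here a nat),
  local randomizers R \<rho> i mapping the neighborhood of node i to a distribution
  on real-valued messages (run independently, i.e. jointly the product measure),
  and a postprocessing map P \<rho> of the message vector.\<close>

definition messages :: "nat \<Rightarrow> (nat \<Rightarrow> nat \<Rightarrow> nat set \<Rightarrow> real measure) \<Rightarrow> nat
    \<Rightarrow> nat set set \<Rightarrow> (nat \<Rightarrow> real) measure" where
  "messages n R \<rho> E = (\<Pi>\<^sub>M i\<in>{1..n}. R \<rho> i (nbhd E i))"

definition LNDP :: "nat \<Rightarrow> real \<Rightarrow> real \<Rightarrow> nat pmf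
    \<Rightarrow> (nat \<Rightarrow> nat \<Rightarrow> nat set \<Rightarrow> real measure)
    \<Rightarrow> (nat \<Rightarrow> (nat \<Rightarrow> real) \<Rightarrow> real) \<Rightarrow> bool" where
  "LNDP n \<epsilon> \<delta> Rho R P \<longleftrightarrow>
     (\<forall>\<rho> i S. prob_space (R \<rho> i S) \<and> sets (R \<rho> i S) = sets borel) \<and>
     (\<forall>\<rho>. P \<rho> \<in> borel_measurable (\<Pi>\<^sub>M i\<in>{1..n}. (borel :: real measure))) \<and>
     (\<forall>\<rho> E E'. node_neighbors n E E' \<longrightarrow>
        indist \<epsilon> \<delta> (messages n R \<rho> E) (messages n R \<rho> E'))"

definition expected_abs_error :: "nat \<Rightarrow> nat pmf
    \<Rightarrow> (nat \<Rightarrow> nat \<Rightarrow> nat set \<Rightarrow> real measure)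
    \<Rightarrow> (nat \<Rightarrow> (nat \<Rightarrow> real) \<Rightarrow> real) \<Rightarrow> nat set set \<Rightarrow> ennreal" where
  "expected_abs_error n Rho R P E =
     (\<integral>\<^sup>+ \<rho>. (\<integral>\<^sup>+ y. ennreal \<bar>P \<rho> y - real (num_edges E)\<bar> \<partial>(messages n R \<rho> E))
        \<partial>(measure_pmf Rho))"

end

theory Submission
  imports Defs
begin

lemma normal_shift:
  fixes a s \<sigma> x :: real
  assumes "0 < \<sigma>"
  shows "normal_density a \<sigma> x * exp (s * (x - a)) = exp (s^2 * \<sigma>^2 / 2) * normal_density (a + s * \<sigma>^2) \<sigma> x"
proof -
  have "-(x - a)\<^sup>2 / (2 * \<sigma>\<^sup>2) + s * (x - a) = s^2 * \<sigma>^2 / 2 + (-(x - (a + s * \<sigma>^2))\<^sup>2 / (2 * \<sigma>\<^sup>2))"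
  proof -
    have "(x - a)\<^sup>2 = (x - (a + s * \<sigma>^2))\<^sup>2 + 2 * s * \<sigma>^2 * (x - a) - s^2 * (\<sigma>^2)^2"
      by (simp add: power2_eq_square algebra_simps)
    then have "-(x - a)\<^sup>2 / (2 * \<sigma>\<^sup>2) = -(x - (a + s * \<sigma>^2))\<^sup>2 / (2 * \<sigma>\<^sup>2) - (2 * s * \<sigma>^2 * (x - a) - s^2 * (\<sigma>^2)^2) / (2 * \<sigma>\<^sup>2)"
      by (simp add: diff_divide_distrib add_divide_distrib)
    also have "(2 * s * \<sigma>^2 * (x - a) - s^2 * (\<sigma>^2)^2) / (2 * \<sigma>\<^sup>2) = s * (x - a) - s^2 * \<sigma>^2 / 2"
      using assms by (simp add: field_simps power2_eq_square eval_nat_numeral)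
    finally show ?thesis by simp
  qed
  then have "exp (-(x - a)\<^sup>2 / (2 * \<sigma>\<^sup>2)) * exp (s * (x - a)) = exp (s^2 * \<sigma>^2 / 2) * exp (-(x - (a + s * \<sigma>^2))\<^sup>2 / (2 * \<sigma>\<^sup>2))"
    by (metis exp_add)
  then show ?thesis unfolding normal_density_def by (simp add: algebra_simps)
qed

lemma nn_integral_normal:
  assumes "0 < \<sigma>"
  shows "(\<integral>\<^sup>+ x. ennreal (normal_density \<mu> \<sigma> x) \<partial>lborel) = 1"
  using assms by (subst nn_integral_eq_integral) auto

lemma normal_mgf:
  assumes "0 < \<sigma>"
  shows "(\<integral>\<^sup>+ x. ennreal (normal_density a \<sigma> x * exp (s * (x - a))) \<partial>lborel) = ennreal (exp (s^2 * \<sigma>^2 / 2))"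
proof -
  have "(\<integral>\<^sup>+ x. ennreal (normal_density a \<sigma> x * exp (s * (x - a))) \<partial>lborel)
     = (\<integral>\<^sup>+ x. ennreal (exp (s^2 * \<sigma>^2 / 2)) * ennreal (normal_density (a + s * \<sigma>^2) \<sigma> x) \<partial>lborel)"
    using assms by (intro nn_integral_cong) (simp add: normal_shift ennreal_mult)
  also have "\<dots> = ennreal (exp (s^2 * \<sigma>^2 / 2)) * (\<integral>\<^sup>+ x. ennreal (normal_density (a + s * \<sigma>^2) \<sigma> x) \<partial>lborel)"
    by (rule nn_integral_cmult) simp
  also have "\<dots> = ennreal (exp (s^2 * \<sigma>^2 / 2))" using nn_integral_normal[OF assms] by simp
  finally show ?thesis .
qed

lemma PiM_normal:
  fixes I :: "nat set"
  assumes "finite I" "0 < \<sigma>"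
  shows "PiM I (\<lambda>i. density lborel (normal_density (a i) \<sigma>))
       = density (PiM I (\<lambda>_. lborel)) (\<lambda>x. ennreal (\<Prod>i\<in>I. normal_density (a i) \<sigma> (x i)))"
proof -
  interpret N: product_sigma_finite "\<lambda>i. density lborel (normal_density (a i) \<sigma>)"
    unfolding product_sigma_finite_def
    using prob_space_normal_density[OF assms(2)] prob_space_imp_sigma_finite by blast
  interpret L: product_sigma_finite "\<lambda>_::nat. lborel :: real measure" by standard
  show ?thesis
  proof (rule N.PiM_eqI[symmetric])
    show "finite I" by fact
    show "sets (density (PiM I (\<lambda>_. lborel)) (\<lambda>x. ennreal (\<Prod>i\<in>I. normal_density (a i) \<sigma> (x i))))
       = sets (PiM I (\<lambda>i. density lborel (normal_density (a i) \<sigma>)))"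
      unfolding sets_density by (rule sets_PiM_cong) auto
  next
    fix A assume A: "\<And>i. i \<in> I \<Longrightarrow> A i \<in> sets (density lborel (normal_density (a i) \<sigma>))"
    have PA: "Pi\<^sub>E I A \<in> sets (PiM I (\<lambda>_. lborel :: real measure))"
      using A by (intro sets_PiM_I_finite) (auto simp: assms)
    have "emeasure (density (PiM I (\<lambda>_. lborel)) (\<lambda>x. ennreal (\<Prod>i\<in>I. normal_density (a i) \<sigma> (x i)))) (Pi\<^sub>E I A)
       = (\<integral>\<^sup>+ x. ennreal (\<Prod>i\<in>I. normal_density (a i) \<sigma> (x i)) * indicator (Pi\<^sub>E I A) x \<partial>PiM I (\<lambda>_. lborel))"
      by (rule emeasure_density[OF _ PA]) simp
    also have "\<dots> = (\<integral>\<^sup>+ x. (\<Prod>i\<in>I. ennreal (normal_density (a i) \<sigma> (x i)) * indicator (A i) (x i)) \<partial>PiM I (\<lambda>_. lborel))"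
    proof (intro nn_integral_cong)
      fix x assume "x \<in> space (PiM I (\<lambda>_. lborel :: real measure))"
      then have xe: "x \<in> extensional I" by (simp add: space_PiM PiE_def)
      have ind: "indicator (Pi\<^sub>E I A) x = (\<Prod>i\<in>I. indicator (A i) (x i) :: ennreal)"
      proof (cases "x \<in> Pi I A")
        case True
        then have "(\<Prod>i\<in>I. indicator (A i) (x i) :: ennreal) = 1"
          by (intro prod.neutral) (auto simp: indicator_def)
        then show ?thesis using True xe by (simp add: PiE_def)
      next
        case False
        then obtain j where "j \<in> I" "x j \<notin> A j" by auto
        then have "(\<Prod>i\<in>I. indicator (A i) (x i) :: ennreal) = 0"
          using assms(1) by (intro prod_zero) (auto simp: indicator_def)
        then show ?thesis using False by (simp add: PiE_def indicator_def)
      qed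
      show "ennreal (\<Prod>i\<in>I. normal_density (a i) \<sigma> (x i)) * indicator (Pi\<^sub>E I A) x
         = (\<Prod>i\<in>I. ennreal (normal_density (a i) \<sigma> (x i)) * indicator (A i) (x i))"
        by (simp add: ind prod_ennreal[symmetric] prod.distrib)
    qed
    also have "\<dots> = (\<Prod>i\<in>I. (\<integral>\<^sup>+ y. ennreal (normal_density (a i) \<sigma> y) * indicator (A i) y \<partial>lborel))"
      using A by (intro L.product_nn_integral_prod assms) auto
    also have "\<dots> = (\<Prod>i\<in>I. emeasure (density lborel (normal_density (a i) \<sigma>)) (A i))"
      using A by (intro prod.cong refl) (simp add: emeasure_density)
    finally show "emeasure (density (PiM I (\<lambda>_. lborel)) (\<lambda>x. ennreal (\<Prod>i\<in>I. normal_density (a i) \<sigma> (x i)))) (Pi\<^sub>E I A)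
       = (\<Prod>i\<in>I. emeasure (density lborel (normal_density (a i) \<sigma>)) (A i))" .
  qed
qed

lemma prod_mgf:
  fixes I :: "nat set"
  assumes "finite I" "0 < \<sigma>"
  shows "(\<integral>\<^sup>+ x. ennreal (\<Prod>i\<in>I. normal_density (a i) \<sigma> (x i) * exp (s i * (x i - a i))) \<partial>PiM I (\<lambda>_. lborel))
       = ennreal (exp (\<Sum>i\<in>I. (s i)^2 * \<sigma>^2 / 2))"
proof -
  interpret L: product_sigma_finite "\<lambda>_::nat. lborel :: real measure" by standard
  have "(\<integral>\<^sup>+ x. ennreal (\<Prod>i\<in>I. normal_density (a i) \<sigma> (x i) * exp (s i * (x i - a i))) \<partial>PiM I (\<lambda>_. lborel))
      = (\<integral>\<^sup>+ x. (\<Prod>i\<in>I. ennreal (normal_density (a i) \<sigma> (x i) * exp (s i * (x i - a i)))) \<partial>PiM I (\<lambda>_. lborel))"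
    by (intro nn_integral_cong) (simp add: prod_ennreal)
  also have "\<dots> = (\<Prod>i\<in>I. (\<integral>\<^sup>+ y. ennreal (normal_density (a i) \<sigma> y * exp (s i * (y - a i))) \<partial>lborel))"
    by (intro L.product_nn_integral_prod assms) auto
  also have "\<dots> = (\<Prod>i\<in>I. ennreal (exp ((s i)^2 * \<sigma>^2 / 2)))"
    using assms by (intro prod.cong refl normal_mgf)
  also have "\<dots> = ennreal (exp (\<Sum>i\<in>I. (s i)^2 * \<sigma>^2 / 2))"
    by (simp add: prod_ennreal exp_sum assms)
  finally show ?thesis .
qed

lemma normal_ratio:
  assumes "0 < \<sigma>"
  shows "normal_density a \<sigma> y = normal_density b \<sigma> y * exp ((a - b) * (y - a) / \<sigma>^2 + (a - b)^2 / (2 * \<sigma>^2))"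
proof -
  have "-(y - a)\<^sup>2 / (2 * \<sigma>\<^sup>2) = -(y - b)\<^sup>2 / (2 * \<sigma>\<^sup>2) + ((a - b) * (y - a) / \<sigma>^2 + (a - b)^2 / (2 * \<sigma>^2))"
  proof -
    have "(y - b)\<^sup>2 - (y - a)\<^sup>2 = 2 * ((a - b) * (y - a)) + (a - b)^2"
      by (simp add: power2_eq_square algebra_simps)
    then have "((y - b)\<^sup>2 - (y - a)\<^sup>2) / (2 * \<sigma>\<^sup>2) = (a - b) * (y - a) / \<sigma>^2 + (a - b)^2 / (2 * \<sigma>^2)"
      using assms by (simp add: add_divide_distrib)
    then show ?thesis by (simp add: diff_divide_distrib)
  qed
  then have "exp (-(y - a)\<^sup>2 / (2 * \<sigma>\<^sup>2)) = exp (-(y - b)\<^sup>2 / (2 * \<sigma>\<^sup>2)) * exp ((a - b) * (y - a) / \<sigma>^2 + (a - b)^2 / (2 * \<sigma>^2))"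
    by (metis exp_add)
  then show ?thesis unfolding normal_density_def by (simp only: mult.assoc)
qed

lemma gauss_one_dir:
  fixes I :: "nat set" and a b :: "nat \<Rightarrow> real"
  assumes I: "finite I" and sp: "0 < \<sigma>" and lp: "0 < l"
    and Y: "Y \<in> sets (PiM I (\<lambda>_. lborel :: real measure))"
  shows "emeasure (PiM I (\<lambda>i. density lborel (normal_density (a i) \<sigma>))) Y
     \<le> ennreal (exp \<epsilon>) * emeasure (PiM I (\<lambda>i. density lborel (normal_density (b i) \<sigma>))) Y
        + ennreal (exp (- l * \<epsilon> + l * (l + 1) * (\<Sum>i\<in>I. (a i - b i)^2) / (2 * \<sigma>^2)))"
proof -
  define q where "q i y = (a i - b i) * (y - a i) / \<sigma>^2 + (a i - b i)^2 / (2 * \<sigma>^2)" for i y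
  define s where "s i = l * (a i - b i) / \<sigma>^2" for i
  define k where "k i = exp (l * (a i - b i)^2 / (2 * \<sigma>^2))" for i
  define fa where "fa x = (\<Prod>i\<in>I. normal_density (a i) \<sigma> (x i))" for x :: "nat \<Rightarrow> real"
  define fb where "fb x = (\<Prod>i\<in>I. normal_density (b i) \<sigma> (x i))" for x :: "nat \<Rightarrow> real"
  define g where "g x = (\<Prod>i\<in>I. normal_density (a i) \<sigma> (x i) * exp (s i * (x i - a i)))" for x :: "nat \<Rightarrow> real"
  define c where "c = exp (- l * \<epsilon>) * (\<Prod>i\<in>I. k i)"
  have fa_nn: "0 \<le> fa x" for x unfolding fa_def by (intro prod_nonneg) auto
  have fb_nn: "0 \<le> fb x" for x unfolding fb_def by (intro prod_nonneg) auto
  have g_nn: "0 \<le> g x" for x unfolding g_def by (intro prod_nonneg) auto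
  have c_nn: "0 \<le> c" unfolding c_def k_def by (intro mult_nonneg_nonneg prod_nonneg) auto
  have fab: "fa x = fb x * exp (\<Sum>i\<in>I. q i (x i))" for x
    unfolding fa_def fb_def q_def exp_sum[OF I] prod.distrib[symmetric]
    using sp by (intro prod.cong refl normal_ratio)
  have fag: "fa x * exp (l * (\<Sum>i\<in>I. q i (x i))) = (\<Prod>i\<in>I. k i) * g x" for x
  proof -
    have "fa x * exp (l * (\<Sum>i\<in>I. q i (x i))) = (\<Prod>i\<in>I. normal_density (a i) \<sigma> (x i) * exp (l * q i (x i)))"
      unfolding fa_def sum_distrib_left exp_sum[OF I] prod.distrib ..
    also have "\<dots> = (\<Prod>i\<in>I. k i * (normal_density (a i) \<sigma> (x i) * exp (s i * (x i - a i))))"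
    proof (intro prod.cong refl)
      fix i
      have "l * q i (x i) = l * (a i - b i)^2 / (2 * \<sigma>^2) + s i * (x i - a i)"
        unfolding q_def s_def by (simp add: algebra_simps)
      then show "normal_density (a i) \<sigma> (x i) * exp (l * q i (x i)) = k i * (normal_density (a i) \<sigma> (x i) * exp (s i * (x i - a i)))"
        unfolding k_def by (simp add: exp_add)
    qed
    also have "\<dots> = (\<Prod>i\<in>I. k i) * g x" unfolding g_def prod.distrib ..
    finally show ?thesis .
  qed
  have pw: "fa x \<le> exp \<epsilon> * fb x + c * g x" for x
  proof (cases "(\<Sum>i\<in>I. q i (x i)) \<le> \<epsilon>")
    case True
    then have "fa x \<le> fb x * exp \<epsilon>" unfolding fab using fb_nn by (intro mult_left_mono) auto
    moreover have "0 \<le> c * g x" using c_nn g_nn by simp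
    ultimately show ?thesis by (simp add: mult.commute)
  next
    case False
    have "fa x \<le> fa x * exp (l * (\<Sum>i\<in>I. q i (x i)) - l * \<epsilon>)"
    proof -
      have "0 \<le> l * (\<Sum>i\<in>I. q i (x i)) - l * \<epsilon>" using False lp
        by (simp add: right_diff_distrib[symmetric])
      then have "1 \<le> exp (l * (\<Sum>i\<in>I. q i (x i)) - l * \<epsilon>)" by simp
      then show ?thesis using fa_nn[of x] by (metis mult_left_mono mult.right_neutral)
    qed
    also have "\<dots> = exp (- l * \<epsilon>) * (fa x * exp (l * (\<Sum>i\<in>I. q i (x i))))"
      by (simp add: exp_diff exp_minus field_simps)
    also have "\<dots> = c * g x" unfolding fag c_def by simp
    finally show ?thesis using fb_nn[of x] by (simp add: add_increasing)
  qed
  have Ma: "PiM I (\<lambda>i. density lborel (normal_density (a i) \<sigma>)) = density (PiM I (\<lambda>_. lborel)) (\<lambda>x. ennreal (fa x))"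
    unfolding fa_def by (rule PiM_normal[OF I sp])
  have Mb: "PiM I (\<lambda>i. density lborel (normal_density (b i) \<sigma>)) = density (PiM I (\<lambda>_. lborel)) (\<lambda>x. ennreal (fb x))"
    unfolding fb_def by (rule PiM_normal[OF I sp])
  have fa_m[measurable]: "fa \<in> borel_measurable (PiM I (\<lambda>_. lborel))" unfolding fa_def by measurable
  have fb_m[measurable]: "fb \<in> borel_measurable (PiM I (\<lambda>_. lborel))" unfolding fb_def by measurable
  have g_m[measurable]: "g \<in> borel_measurable (PiM I (\<lambda>_. lborel))" unfolding g_def by measurable
  have "emeasure (PiM I (\<lambda>i. density lborel (normal_density (a i) \<sigma>))) Y
      = (\<integral>\<^sup>+ x. ennreal (fa x) * indicator Y x \<partial>PiM I (\<lambda>_. lborel))"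
    unfolding Ma by (rule emeasure_density[OF _ Y]) simp
  also have "\<dots> \<le> (\<integral>\<^sup>+ x. ennreal (exp \<epsilon>) * (ennreal (fb x) * indicator Y x) + ennreal c * ennreal (g x) \<partial>PiM I (\<lambda>_. lborel))"
  proof (intro nn_integral_mono)
    fix x
    show "ennreal (fa x) * indicator Y x \<le> ennreal (exp \<epsilon>) * (ennreal (fb x) * indicator Y x) + ennreal c * ennreal (g x)"
    proof (cases "x \<in> Y")
      case True
      have "ennreal (fa x) \<le> ennreal (exp \<epsilon> * fb x + c * g x)" using pw[of x] by (rule ennreal_leI)
      also have "\<dots> = ennreal (exp \<epsilon>) * ennreal (fb x) + ennreal c * ennreal (g x)"
        using fb_nn[of x] g_nn[of x] c_nn by (simp add: ennreal_plus ennreal_mult)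
      finally show ?thesis using True by simp
    qed simp
  qed
  also have "\<dots> = ennreal (exp \<epsilon>) * (\<integral>\<^sup>+ x. ennreal (fb x) * indicator Y x \<partial>PiM I (\<lambda>_. lborel))
       + ennreal c * (\<integral>\<^sup>+ x. ennreal (g x) \<partial>PiM I (\<lambda>_. lborel))"
    using Y by (simp add: nn_integral_add nn_integral_cmult)
  also have "(\<integral>\<^sup>+ x. ennreal (fb x) * indicator Y x \<partial>PiM I (\<lambda>_. lborel))
      = emeasure (PiM I (\<lambda>i. density lborel (normal_density (b i) \<sigma>))) Y"
    unfolding Mb by (rule emeasure_density[OF _ Y, symmetric]) simp
  also have "(\<integral>\<^sup>+ x. ennreal (g x) \<partial>PiM I (\<lambda>_. lborel)) = ennreal (exp (\<Sum>i\<in>I. (s i)^2 * \<sigma>^2 / 2))"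
    unfolding g_def by (rule prod_mgf[OF I sp])
  also have "ennreal c * ennreal (exp (\<Sum>i\<in>I. (s i)^2 * \<sigma>^2 / 2))
      = ennreal (exp (- l * \<epsilon> + l * (l + 1) * (\<Sum>i\<in>I. (a i - b i)^2) / (2 * \<sigma>^2)))"
  proof -
    have "c * exp (\<Sum>i\<in>I. (s i)^2 * \<sigma>^2 / 2)
        = exp (- l * \<epsilon> + ((\<Sum>i\<in>I. l * (a i - b i)^2 / (2 * \<sigma>^2)) + (\<Sum>i\<in>I. (s i)^2 * \<sigma>^2 / 2)))"
      unfolding c_def k_def exp_add exp_sum[OF I] by (simp add: mult.assoc)
    also have "(\<Sum>i\<in>I. l * (a i - b i)^2 / (2 * \<sigma>^2)) + (\<Sum>i\<in>I. (s i)^2 * \<sigma>^2 / 2)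
        = l * (l + 1) * (\<Sum>i\<in>I. (a i - b i)^2) / (2 * \<sigma>^2)"
    proof -
      have "(s i)^2 * \<sigma>^2 / 2 = l * l * (a i - b i)^2 / (2 * \<sigma>^2)" for i
        unfolding s_def using sp by (simp add: power2_eq_square field_simps)
      then have "(\<Sum>i\<in>I. l * (a i - b i)^2 / (2 * \<sigma>^2)) + (\<Sum>i\<in>I. (s i)^2 * \<sigma>^2 / 2)
          = (\<Sum>i\<in>I. (l * (l + 1) / (2 * \<sigma>^2)) * (a i - b i)^2)"
        by (simp add: sum.distrib[symmetric] algebra_simps add_divide_distrib)
      also have "\<dots> = l * (l + 1) * (\<Sum>i\<in>I. (a i - b i)^2) / (2 * \<sigma>^2)"
        by (simp add: sum_distrib_left[symmetric] sum_divide_distrib[symmetric] mult.assoc)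
      finally show ?thesis .
    qed
    finally show ?thesis using c_nn by (simp add: ennreal_mult[symmetric])
  qed
  finally show ?thesis .
qed

lemma abs_le_cosh:
  fixes t X :: real assumes "0 < t"
  shows "\<bar>X\<bar> \<le> (exp (t * X) + exp (- t * X)) / t"
proof -
  have "1 + \<bar>t * X\<bar> \<le> exp \<bar>t * X\<bar>" by (rule exp_ge_add_one_self)
  moreover have "exp \<bar>t * X\<bar> \<le> exp (t * X) + exp (- t * X)"
    by (cases "0 \<le> t * X") (auto simp: abs_if add_increasing add_increasing2 less_imp_le)
  moreover have "\<bar>t * X\<bar> = t * \<bar>X\<bar>" using assms by (simp add: abs_mult)
  ultimately have "t * \<bar>X\<bar> \<le> exp (t * X) + exp (- t * X)" by linarith
  then show ?thesis using assms by (simp add: field_simps)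
qed

lemma gauss_abs:
  fixes I :: "nat set" and a :: "nat \<Rightarrow> real"
  assumes I: "finite I" and sp: "0 < \<sigma>" and tp: "0 < t"
  shows "(\<integral>\<^sup>+ x. ennreal \<bar>\<Sum>i\<in>I. (x i - a i)\<bar> \<partial>PiM I (\<lambda>i. density lborel (normal_density (a i) \<sigma>)))
     \<le> ennreal (2 * exp (real (card I) * t^2 * \<sigma>^2 / 2) / t)"
proof -
  define fa where "fa x = (\<Prod>i\<in>I. normal_density (a i) \<sigma> (x i))" for x :: "nat \<Rightarrow> real"
  define g where "g u x = (\<Prod>i\<in>I. normal_density (a i) \<sigma> (x i) * exp ((\<lambda>_. u) i * (x i - a i)))" for u and x :: "nat \<Rightarrow> real"
  have fa_nn: "0 \<le> fa x" for x unfolding fa_def by (intro prod_nonneg) auto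
  have g_nn: "0 \<le> g u x" for u x unfolding g_def by (intro prod_nonneg) auto
  have fg: "fa x * exp (u * (\<Sum>i\<in>I. (x i - a i))) = g u x" for u x
    unfolding fa_def g_def sum_distrib_left exp_sum[OF I] prod.distrib by simp
  have Ma: "PiM I (\<lambda>i. density lborel (normal_density (a i) \<sigma>)) = density (PiM I (\<lambda>_. lborel)) (\<lambda>x. ennreal (fa x))"
    unfolding fa_def by (rule PiM_normal[OF I sp])
  have fa_m[measurable]: "fa \<in> borel_measurable (PiM I (\<lambda>_. lborel))" unfolding fa_def by measurable
  have g_m[measurable]: "g u \<in> borel_measurable (PiM I (\<lambda>_. lborel))" for u unfolding g_def by measurable
  have gint: "(\<integral>\<^sup>+ x. ennreal (g u x) \<partial>PiM I (\<lambda>_. lborel)) = ennreal (exp (real (card I) * t^2 * \<sigma>^2 / 2))"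
    if "u = t \<or> u = - t" for u
  proof -
    have "(\<integral>\<^sup>+ x. ennreal (g u x) \<partial>PiM I (\<lambda>_. lborel)) = ennreal (exp (\<Sum>i\<in>I. ((\<lambda>_. u) i)^2 * \<sigma>^2 / 2))"
      unfolding g_def by (rule prod_mgf[OF I sp])
    also have "(\<Sum>i\<in>I. ((\<lambda>_. u) i)^2 * \<sigma>^2 / 2) = real (card I) * t^2 * \<sigma>^2 / 2"
      using that by auto
    finally show ?thesis .
  qed
  have "(\<integral>\<^sup>+ x. ennreal \<bar>\<Sum>i\<in>I. (x i - a i)\<bar> \<partial>PiM I (\<lambda>i. density lborel (normal_density (a i) \<sigma>)))
      = (\<integral>\<^sup>+ x. ennreal (fa x) * ennreal \<bar>\<Sum>i\<in>I. (x i - a i)\<bar> \<partial>PiM I (\<lambda>_. lborel))"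
    unfolding Ma by (rule nn_integral_density) auto
  also have "\<dots> \<le> (\<integral>\<^sup>+ x. ennreal (1 / t) * ennreal (g t x) + ennreal (1 / t) * ennreal (g (- t) x) \<partial>PiM I (\<lambda>_. lborel))"
  proof (intro nn_integral_mono)
    fix x
    define X where "X = (\<Sum>i\<in>I. (x i - a i))"
    have "fa x * \<bar>X\<bar> \<le> fa x * ((exp (t * X) + exp (- t * X)) / t)"
      using abs_le_cosh[OF tp, of X] fa_nn[of x] by (rule mult_left_mono)
    also have "\<dots> = 1 / t * g t x + 1 / t * g (- t) x"
      unfolding fg[symmetric] X_def by (simp add: add_divide_distrib distrib_left)
    finally have fin: "ennreal (fa x * \<bar>X\<bar>) \<le> ennreal (1 / t * g t x + 1 / t * g (- t) x)"
      by (rule ennreal_leI)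
    have e1: "ennreal (1 / t * g t x + 1 / t * g (- t) x) = ennreal (1 / t * g t x) + ennreal (1 / t * g (- t) x)"
      by (rule ennreal_plus) (use tp g_nn in auto)
    have e2: "ennreal (1 / t * g u x) = ennreal (1 / t) * ennreal (g u x)" for u
      by (rule ennreal_mult') (use tp in simp)
    have e3: "ennreal (fa x * \<bar>X\<bar>) = ennreal (fa x) * ennreal \<bar>X\<bar>"
      by (rule ennreal_mult') (rule fa_nn)
    show "ennreal (fa x) * ennreal \<bar>\<Sum>i\<in>I. (x i - a i)\<bar> \<le> ennreal (1 / t) * ennreal (g t x) + ennreal (1 / t) * ennreal (g (- t) x)"
      using fin[unfolded e1 e2 e3] unfolding X_def .
  qed
  also have "\<dots> = ennreal (1 / t) * (\<integral>\<^sup>+ x. ennreal (g t x) \<partial>PiM I (\<lambda>_. lborel))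
      + ennreal (1 / t) * (\<integral>\<^sup>+ x. ennreal (g (- t) x) \<partial>PiM I (\<lambda>_. lborel))"
    by (simp add: nn_integral_add nn_integral_cmult)
  also have "\<dots> = ennreal (1 / t) * ennreal (exp (real (card I) * t^2 * \<sigma>^2 / 2))
      + ennreal (1 / t) * ennreal (exp (real (card I) * t^2 * \<sigma>^2 / 2))"
    using gint[of t] gint[of "-t"] by simp
  also have "\<dots> = ennreal (1 / t * exp (real (card I) * t^2 * \<sigma>^2 / 2) + 1 / t * exp (real (card I) * t^2 * \<sigma>^2 / 2))"
    using tp by (simp only: ennreal_plus ennreal_mult' less_imp_le divide_nonneg_nonneg zero_le_one exp_ge_zero mult_nonneg_nonneg)
  also have "\<dots> = ennreal (2 * exp (real (card I) * t^2 * \<sigma>^2 / 2) / t)"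
    by simp
  finally show ?thesis by simp
qed

lemma nbhd_subset:
  assumes "graph_on n E" shows "nbhd E i \<subseteq> {1..n}"
proof
  fix j assume "j \<in> nbhd E i"
  then have "{i, j} \<in> E" by (simp add: nbhd_def)
  with assms obtain u v where "{i, j} = {u, v}" "u \<in> {1..n}" "v \<in> {1..n}"
    unfolding graph_on_def by blast
  then show "j \<in> {1..n}" by (auto simp: doubleton_eq_iff)
qed

lemma finite_nbhd: "graph_on n E \<Longrightarrow> finite (nbhd E i)"
  using finite_subset[OF nbhd_subset[of n E i]] by simp

lemma graph_finite:
  assumes "graph_on n E" shows "finite E"
proof -
  have "E \<subseteq> Pow {1..n}"
  proof
    fix e assume "e \<in> E"
    with assms obtain u v where "e = {u, v}" "u \<in> {1..n}" "v \<in> {1..n}"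
      unfolding graph_on_def by meson
    then show "e \<in> Pow {1..n}" by simp
  qed
  then show ?thesis using finite_subset[of E "Pow {1..n}"] by simp
qed

lemma card_nbhd_inc:
  assumes "graph_on n E"
  shows "card (nbhd E i) = card {e\<in>E. i \<in> e}"
proof (rule bij_betw_same_card)
  show "bij_betw (\<lambda>j. {i, j}) (nbhd E i) {e\<in>E. i \<in> e}"
  proof (rule bij_betwI')
    fix x y assume "x \<in> nbhd E i" "y \<in> nbhd E i"
    show "({i, x} = {i, y}) = (x = y)" by (auto simp: doubleton_eq_iff)
  next
    fix x assume "x \<in> nbhd E i" then show "{i, x} \<in> {e \<in> E. i \<in> e}" by (simp add: nbhd_def)
  next
    fix e assume e: "e \<in> {e \<in> E. i \<in> e}"
    with assms obtain u v where uv: "e = {u, v}" unfolding graph_on_def by blast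
    show "\<exists>x\<in>nbhd E i. e = {i, x}"
    proof (cases "u = i")
      case True then show ?thesis using e uv by (auto simp: nbhd_def)
    next
      case False then have "v = i" using e uv by auto
      then show ?thesis using e uv by (auto simp: nbhd_def insert_commute)
    qed
  qed
qed

lemma handshake:
  assumes G: "graph_on n E"
  shows "(\<Sum>i\<in>{1..n}. card (nbhd E i)) = 2 * card E"
proof -
  have fE: "finite E" by (rule graph_finite[OF G])
  have "(\<Sum>i\<in>{1..n}. card (nbhd E i)) = (\<Sum>i\<in>{1..n}. \<Sum>e\<in>E. if i \<in> e then 1 else 0)"
  proof (intro sum.cong refl)
    fix i
    have "card {e\<in>E. i \<in> e} = (\<Sum>e\<in>{e\<in>E. i \<in> e}. 1)" by simp
    also have "\<dots> = (\<Sum>e\<in>E. if i \<in> e then 1 else 0)" using fE by (rule sum.inter_filter)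
    finally show "card (nbhd E i) = (\<Sum>e\<in>E. if i \<in> e then 1 else 0)"
      using card_nbhd_inc[OF G] by simp
  qed
  also have "\<dots> = (\<Sum>e\<in>E. \<Sum>i\<in>{1..n}. if i \<in> e then 1 else 0)" by (rule sum.swap)
  also have "\<dots> = (\<Sum>e\<in>E. 2)"
  proof (intro sum.cong refl)
    fix e assume "e \<in> E"
    with G obtain u v where uv: "e = {u, v}" "u \<noteq> v" "u \<in> {1..n}" "v \<in> {1..n}"
      unfolding graph_on_def by blast
    have "(\<Sum>i\<in>{1..n}. if i \<in> e then 1 else 0) = (\<Sum>i\<in>{i\<in>{1..n}. i \<in> e}. 1::nat)"
      by (rule sum.inter_filter[symmetric]) simp
    also have "{i\<in>{1..n}. i \<in> e} = {u, v}" using uv by auto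
    finally show "(\<Sum>i\<in>{1..n}. if i \<in> e then 1 else 0) = (2::nat)" using uv by simp
  qed
  finally show ?thesis by simp
qed

definition cdeg :: "nat \<Rightarrow> nat set \<Rightarrow> real" where
  "cdeg D S = real (min (card S) D)"

lemma card_diff_le1:
  assumes "finite A" "finite B" "A - {v} = B - {v}"
  shows "card A \<le> card B + 1 \<and> card B \<le> card A + 1"
proof -
  have "card A \<le> card (A - {v}) + 1" "card (A - {v}) \<le> card A"
    using assms(1) by (auto simp: card_Diff_singleton_if)
  moreover have "card B \<le> card (B - {v}) + 1" "card (B - {v}) \<le> card B"
    using assms(2) by (auto simp: card_Diff_singleton_if)
  moreover have "card (A - {v}) = card (B - {v})" using assms(3) by simp
  ultimately show ?thesis by linarith
qed

lemma sq_le_of_abs: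
  fixes x c :: real
  assumes "\<bar>x\<bar> \<le> c"
  shows "x^2 \<le> c^2"
proof -
  have "\<bar>x\<bar>^2 \<le> c^2" using assms by (intro power_mono) auto
  then show ?thesis by simp
qed

lemma cdeg_diff_le_D: "\<bar>cdeg D S - cdeg D T\<bar> \<le> real D"
proof -
  have "min (card S) D \<le> D" "min (card T) D \<le> D" by auto
  then show ?thesis unfolding cdeg_def by linarith
qed

lemma cdeg_lip:
  assumes "card S \<le> card T + 1 \<and> card T \<le> card S + 1"
  shows "\<bar>cdeg D S - cdeg D T\<bar> \<le> 1"
proof -
  have "min (card S) D \<le> min (card T) D + 1" "min (card T) D \<le> min (card S) D + 1"
    using assms by linarith+
  then show ?thesis unfolding cdeg_def by linarith
qed

lemma sensitivity:
  assumes NN: "node_neighbors n E E'"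
  shows "(\<Sum>i\<in>{1..n}. (cdeg D (nbhd E i) - cdeg D (nbhd E' i))^2) \<le> real D ^ 2 + real n"
proof -
  from NN have G: "graph_on n E" "graph_on n E'" unfolding node_neighbors_def by auto
  from NN obtain v where v: "v \<in> {1..n}" "\<And>e. v \<notin> e \<Longrightarrow> (e \<in> E \<longleftrightarrow> e \<in> E')"
    unfolding node_neighbors_def by blast
  have tm: "(cdeg D (nbhd E i) - cdeg D (nbhd E' i))^2 \<le> real D ^ 2 * (if i = v then 1 else 0) + 1" for i
  proof (cases "i = v")
    case True
    have "(cdeg D (nbhd E i) - cdeg D (nbhd E' i))^2 \<le> (real D)^2"
      by (rule sq_le_of_abs) (rule cdeg_diff_le_D)
    then show ?thesis using True by simp
  next
    case False
    have "nbhd E i - {v} = nbhd E' i - {v}"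
    proof (intro set_eqI iffI)
      fix j assume "j \<in> nbhd E i - {v}"
      then have "{i, j} \<in> E" "v \<notin> {i, j}" using False by (auto simp: nbhd_def)
      then show "j \<in> nbhd E' i - {v}" using v(2)[of "{i, j}"] by (auto simp: nbhd_def)
    next
      fix j assume "j \<in> nbhd E' i - {v}"
      then have "{i, j} \<in> E'" "v \<notin> {i, j}" using False by (auto simp: nbhd_def)
      then show "j \<in> nbhd E i - {v}" using v(2)[of "{i, j}"] by (auto simp: nbhd_def)
    qed
    then have "card (nbhd E i) \<le> card (nbhd E' i) + 1 \<and> card (nbhd E' i) \<le> card (nbhd E i) + 1"
      by (rule card_diff_le1[OF finite_nbhd[OF G(1)] finite_nbhd[OF G(2)]])
    then have "\<bar>cdeg D (nbhd E i) - cdeg D (nbhd E' i)\<bar> \<le> 1"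
      by (rule cdeg_lip)
    then have "(cdeg D (nbhd E i) - cdeg D (nbhd E' i))^2 \<le> 1^2"
      by (rule sq_le_of_abs)
    then show ?thesis using False by simp
  qed
  have "(\<Sum>i\<in>{1..n}. (cdeg D (nbhd E i) - cdeg D (nbhd E' i))^2) \<le> (\<Sum>i\<in>{1..n}. real D ^ 2 * (if i = v then 1 else 0) + 1)"
    by (intro sum_mono tm)
  also have "\<dots> = real D ^ 2 + real n"
  proof -
    have s1: "(\<Sum>i\<in>{1..n}. real D ^ 2 * (if i = v then 1 else 0) + 1)
        = (\<Sum>i\<in>{1..n}. real D ^ 2 * (if i = v then 1 else 0)) + (\<Sum>i\<in>{1..n}. (1::real))"
      by (rule sum.distrib)
    have s2: "(\<Sum>i\<in>{1..n}. real D ^ 2 * (if i = v then 1 else 0)) = (\<Sum>i\<in>{1..n}. (if i = v then real D ^ 2 else 0))"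
      by (intro sum.cong refl) simp
    have s3: "(\<Sum>i\<in>{1..n}. (if i = v then real D ^ 2 else 0)) = real D ^ 2" using v(1) by (subst sum.delta) simp_all
    have s4: "(\<Sum>i\<in>{1..n}. (1::real)) = real n" by simp
    show ?thesis unfolding s1 s2 s3 s4 ..
  qed
  finally show ?thesis .
qed

definition gR :: "real \<Rightarrow> nat \<Rightarrow> nat \<Rightarrow> nat \<Rightarrow> nat set \<Rightarrow> real measure" where
  "gR \<sigma> D \<rho> i S = density lborel (normal_density (cdeg D S) \<sigma>)"

definition gP :: "nat \<Rightarrow> nat \<Rightarrow> (nat \<Rightarrow> real) \<Rightarrow> real" where
  "gP n \<rho> y = (\<Sum>i\<in>{1..n}. y i) / 2"

lemma messages_gR:
  "messages n (gR \<sigma> D) \<rho> E = PiM {1..n} (\<lambda>i. density lborel (normal_density (cdeg D (nbhd E i)) \<sigma>))"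
  unfolding messages_def gR_def ..

lemma prob_PiM_normal:
  assumes "0 < \<sigma>"
  shows "prob_space (PiM I (\<lambda>i. density lborel (normal_density (a i) \<sigma>)))"
  by (intro prob_space_PiM prob_space_normal_density assms)

lemma emeasure_to_measure:
  assumes "prob_space M1" "prob_space M2" "0 \<le> c" "0 \<le> d"
    and "emeasure M1 Y \<le> ennreal c * emeasure M2 Y + ennreal d"
  shows "measure M1 Y \<le> c * measure M2 Y + d"
proof -
  interpret P1: prob_space M1 by fact
  interpret P2: prob_space M2 by fact
  have "ennreal (measure M1 Y) \<le> ennreal c * ennreal (measure M2 Y) + ennreal d"
    using assms(5) by (simp add: P1.emeasure_eq_measure P2.emeasure_eq_measure)
  also have "\<dots> = ennreal (c * measure M2 Y + d)"
    using assms(3,4) by (simp add: ennreal_plus ennreal_mult)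
  finally show ?thesis using assms(3,4) by (subst (asm) ennreal_le_iff) auto
qed

lemma indist_gauss:
  fixes I :: "nat set" and a b :: "nat \<Rightarrow> real"
  assumes I: "finite I" and sp: "0 < \<sigma>" and lp: "0 < l"
    and Sab: "(\<Sum>i\<in>I. (a i - b i)^2) \<le> K" and Sba: "(\<Sum>i\<in>I. (b i - a i)^2) \<le> K"
    and bd: "exp (- l * \<epsilon> + l * (l + 1) * K / (2 * \<sigma>^2)) \<le> \<delta>"
  shows "indist \<epsilon> \<delta> (PiM I (\<lambda>i. density lborel (normal_density (a i) \<sigma>)))
                       (PiM I (\<lambda>i. density lborel (normal_density (b i) \<sigma>)))"
proof -
  have mono: "exp (- l * \<epsilon> + l * (l + 1) * S / (2 * \<sigma>^2)) \<le> \<delta>" if "S \<le> K" for S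
  proof -
    have "l * (l + 1) * S / (2 * \<sigma>^2) \<le> l * (l + 1) * K / (2 * \<sigma>^2)"
      using that lp sp by (intro divide_right_mono mult_left_mono) auto
    then show ?thesis using bd by (meson add_left_mono exp_le_cancel_iff order_trans)
  qed
  have dp: "0 \<le> \<delta>" using bd exp_gt_zero less_imp_le order_trans by (meson exp_ge_zero)
  have sets_eq: "sets (PiM I (\<lambda>i. density lborel (normal_density (c i) \<sigma>))) = sets (PiM I (\<lambda>_. lborel :: real measure))" for c
    by (rule sets_PiM_cong) auto
  have dir: "measure (PiM I (\<lambda>i. density lborel (normal_density (a i) \<sigma>))) Y
      \<le> exp \<epsilon> * measure (PiM I (\<lambda>i. density lborel (normal_density (b i) \<sigma>))) Y + \<delta>"
    if Y: "Y \<in> sets (PiM I (\<lambda>_. lborel :: real measure))"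
      and S: "(\<Sum>i\<in>I. (a i - b i)^2) \<le> K" for a b Y
  proof (rule emeasure_to_measure[OF prob_PiM_normal[OF sp] prob_PiM_normal[OF sp] _ dp])
    show "0 \<le> exp \<epsilon>" by simp
    have "emeasure (PiM I (\<lambda>i. density lborel (normal_density (a i) \<sigma>))) Y
     \<le> ennreal (exp \<epsilon>) * emeasure (PiM I (\<lambda>i. density lborel (normal_density (b i) \<sigma>))) Y
        + ennreal (exp (- l * \<epsilon> + l * (l + 1) * (\<Sum>i\<in>I. (a i - b i)^2) / (2 * \<sigma>^2)))"
      by (rule gauss_one_dir[OF I sp lp Y])
    also have "\<dots> \<le> ennreal (exp \<epsilon>) * emeasure (PiM I (\<lambda>i. density lborel (normal_density (b i) \<sigma>))) Y + ennreal \<delta>"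
      using mono[OF S] by (intro add_left_mono ennreal_leI)
    finally show "emeasure (PiM I (\<lambda>i. density lborel (normal_density (a i) \<sigma>))) Y
     \<le> ennreal (exp \<epsilon>) * emeasure (PiM I (\<lambda>i. density lborel (normal_density (b i) \<sigma>))) Y + ennreal \<delta>" .
  qed
  show ?thesis unfolding indist_def
  proof
    fix Y assume "Y \<in> sets (PiM I (\<lambda>i. density lborel (normal_density (a i) \<sigma>)))"
    then have Y: "Y \<in> sets (PiM I (\<lambda>_. lborel :: real measure))" using sets_eq by blast
    show "measure (PiM I (\<lambda>i. density lborel (normal_density (a i) \<sigma>))) Y
          \<le> exp \<epsilon> * measure (PiM I (\<lambda>i. density lborel (normal_density (b i) \<sigma>))) Y + \<delta> \<and>
          measure (PiM I (\<lambda>i. density lborel (normal_density (b i) \<sigma>))) Y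
          \<le> exp \<epsilon> * measure (PiM I (\<lambda>i. density lborel (normal_density (a i) \<sigma>))) Y + \<delta>"
      using dir[OF Y Sab] dir[OF Y Sba] by blast
  qed
qed

lemma exponent_bound:
  fixes \<epsilon> \<delta> K :: real
  assumes e: "0 < \<epsilon>" "\<epsilon> < 1" and d: "0 < \<delta>" "\<delta> \<le> 1/2" and K: "0 < K"
    and S: "S \<le> K^2"
  defines "L \<equiv> ln (1 / \<delta>)"
  defines "\<sigma> \<equiv> 4 * K * sqrt L / \<epsilon>"
  defines "l \<equiv> 2 * L / \<epsilon>"
  shows "exp (- l * \<epsilon> + l * (l + 1) * S / (2 * \<sigma>^2)) \<le> \<delta>"
proof -
  have "ln 2 \<le> L" unfolding L_def using d by (subst ln_le_cancel_iff) (auto simp: field_simps)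
  then have L: "2/3 \<le> L" using ln2_ge_two_thirds by linarith
  have lp: "0 < l" unfolding l_def using L e by auto
  have sig2: "\<sigma>^2 = 16 * K^2 * L / \<epsilon>^2"
    unfolding \<sigma>_def using L by (simp add: power_divide power_mult_distrib)
  have "l * (l + 1) * S / (2 * \<sigma>^2) \<le> l * (l + 1) * K^2 / (2 * \<sigma>^2)"
    using S lp by (intro divide_right_mono mult_left_mono) auto
  also have "\<dots> = (2 * L + \<epsilon>) / 16"
    unfolding sig2 l_def using e K L by (simp add: field_simps power2_eq_square)
  finally have A: "l * (l + 1) * S / (2 * \<sigma>^2) \<le> (2 * L + \<epsilon>) / 16" .
  have le: "- l * \<epsilon> = - (2 * L)" unfolding l_def using e by simp
  have "- l * \<epsilon> + l * (l + 1) * S / (2 * \<sigma>^2) \<le> - L"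
  proof -
    define B where "B = l * (l + 1) * S / (2 * \<sigma>^2)"
    have "B \<le> (2 * L + \<epsilon>) / 16" using A unfolding B_def .
    then have "B \<le> L" using e L by argo
    then show ?thesis unfolding le B_def[symmetric] by linarith
  qed
  then have "exp (- l * \<epsilon> + l * (l + 1) * S / (2 * \<sigma>^2)) \<le> exp (- L)" by simp
  also have "exp (- L) = \<delta>" unfolding L_def using d by (simp add: ln_div)
  finally show ?thesis .
qed

lemma accuracy:
  assumes G: "graph_on n E" and MD: "max_degree_le n E D" and n: "1 \<le> n" and sp: "0 < \<sigma>"
  shows "(\<integral>\<^sup>+ y. ennreal \<bar>gP n \<rho> y - real (num_edges E)\<bar> \<partial>messages n (gR \<sigma> D) \<rho> E)
       \<le> ennreal (2 * exp (1/2) * \<sigma> * sqrt (real n))"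
proof -
  define a where "a i = cdeg D (nbhd E i)" for i
  have a_eq: "a i = real (card (nbhd E i))" if "i \<in> {1..n}" for i
    using MD that unfolding a_def cdeg_def max_degree_le_def degree_def by (simp add: min_def)
  have suma: "(\<Sum>i\<in>{1..n}. a i) = 2 * real (num_edges E)"
  proof -
    have "(\<Sum>i\<in>{1..n}. a i) = (\<Sum>i\<in>{1..n}. real (card (nbhd E i)))"
      by (intro sum.cong refl a_eq)
    also have "\<dots> = real (\<Sum>i\<in>{1..n}. card (nbhd E i))" by simp
    also have "\<dots> = 2 * real (num_edges E)" using handshake[OF G] by (simp add: num_edges_def)
    finally show ?thesis .
  qed
  have pw: "\<bar>gP n \<rho> y - real (num_edges E)\<bar> \<le> \<bar>\<Sum>i\<in>{1..n}. (y i - a i)\<bar>" for y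
  proof -
    have "gP n \<rho> y - real (num_edges E) = (\<Sum>i\<in>{1..n}. (y i - a i)) / 2"
      unfolding gP_def sum_subtractf suma by (simp add: field_simps)
    then show ?thesis by simp
  qed
  define t where "t = 1 / (\<sigma> * sqrt (real n))"
  have sn: "0 < sqrt (real n)" using n by simp
  have tp: "0 < t" unfolding t_def using sp sn by simp
  have "(\<integral>\<^sup>+ y. ennreal \<bar>gP n \<rho> y - real (num_edges E)\<bar> \<partial>messages n (gR \<sigma> D) \<rho> E)
      \<le> (\<integral>\<^sup>+ y. ennreal \<bar>\<Sum>i\<in>{1..n}. (y i - a i)\<bar> \<partial>messages n (gR \<sigma> D) \<rho> E)"
    by (intro nn_integral_mono ennreal_leI pw)
  also have "\<dots> = (\<integral>\<^sup>+ y. ennreal \<bar>\<Sum>i\<in>{1..n}. (y i - a i)\<bar> \<partial>PiM {1..n} (\<lambda>i. density lborel (normal_density (a i) \<sigma>)))"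
    unfolding messages_gR a_def ..
  also have "\<dots> \<le> ennreal (2 * exp (real (card {1..n}) * t^2 * \<sigma>^2 / 2) / t)"
    by (rule gauss_abs[OF _ sp tp]) simp
  also have "2 * exp (real (card {1..n}) * t^2 * \<sigma>^2 / 2) / t = 2 * exp (1/2) * \<sigma> * sqrt (real n)"
  proof -
    have "real (card {1..n}) * t^2 * \<sigma>^2 / 2 = 1/2"
      unfolding t_def using sp n by (simp add: power_divide power_mult_distrib)
    then show ?thesis unfolding t_def by simp
  qed
  finally show ?thesis .
qed

theorem theorem3p3:
  shows "\<exists>C::real. C > 0 \<and>
    (\<forall>(\<epsilon>::real) (\<delta>::real) (n::nat) (D::nat).
       0 < \<epsilon> \<and> \<epsilon> < 1 \<and> 0 < \<delta> \<and> \<delta> \<le> 1/2 \<longrightarrow>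
       (\<exists>Rho R P. LNDP n \<epsilon> \<delta> Rho R P \<and>
          (\<forall>E. graph_on n E \<and> max_degree_le n E D \<longrightarrow>
             expected_abs_error n Rho R P E
               \<le> ennreal (C * (real D * sqrt (real n) + real n) * sqrt (ln (1 / \<delta>)) / \<epsilon>))))"
proof (intro exI[of _ 32] conjI allI impI)
  show "(0::real) < 32" by simp
  fix \<epsilon> \<delta> :: real and n D :: nat
  assume H: "0 < \<epsilon> \<and> \<epsilon> < 1 \<and> 0 < \<delta> \<and> \<delta> \<le> 1/2"
  then have e: "0 < \<epsilon>" "\<epsilon> < 1" and d: "0 < \<delta>" "\<delta> \<le> 1/2" by auto
  define L where "L = ln (1 / \<delta>)"
  define K where "K = real D + sqrt (real n) + 1"
  define \<sigma> where "\<sigma> = 4 * K * sqrt L / \<epsilon>"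
  define l where "l = 2 * L / \<epsilon>"
  have "ln 2 \<le> L" unfolding L_def using d by (subst ln_le_cancel_iff) (auto simp: field_simps)
  then have L: "2/3 \<le> L" using ln2_ge_two_thirds by linarith
  have Kp: "1 \<le> K" unfolding K_def by simp
  have sp: "0 < \<sigma>" unfolding \<sigma>_def using Kp L e by simp
  have lp: "0 < l" unfolding l_def using L e by simp
  have KS: "real D ^ 2 + real n \<le> K^2"
  proof -
    have "K^2 = (real D + sqrt (real n) + 1)^2" unfolding K_def ..
    also have "\<dots> = real D ^ 2 + (sqrt (real n))^2 + 1 + 2 * real D * sqrt (real n) + 2 * real D + 2 * sqrt (real n)"
      by (simp add: power2_eq_square algebra_simps)
    also have "(sqrt (real n))^2 = real n" by simp
    finally show ?thesis by simp
  qed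
  have bd: "exp (- l * \<epsilon> + l * (l + 1) * (real D ^ 2 + real n) / (2 * \<sigma>^2)) \<le> \<delta>"
    unfolding l_def \<sigma>_def L_def
    by (rule exponent_bound[OF e d _ KS]) (use Kp in simp)
  show "\<exists>Rho R P. LNDP n \<epsilon> \<delta> Rho R P \<and>
          (\<forall>E. graph_on n E \<and> max_degree_le n E D \<longrightarrow>
             expected_abs_error n Rho R P E
               \<le> ennreal (32 * (real D * sqrt (real n) + real n) * sqrt (ln (1 / \<delta>)) / \<epsilon>))"
  proof (intro exI[of _ "return_pmf 0"] exI[of _ "gR \<sigma> D"] exI[of _ "gP n"] conjI allI impI)
    show "LNDP n \<epsilon> \<delta> (return_pmf 0) (gR \<sigma> D) (gP n)"
      unfolding LNDP_def
    proof (intro conjI allI impI)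
      fix \<rho> i S
      show "prob_space (gR \<sigma> D \<rho> i S)" unfolding gR_def by (rule prob_space_normal_density[OF sp])
      show "sets (gR \<sigma> D \<rho> i S) = sets borel" unfolding gR_def by simp
    next
      fix \<rho>
      show "gP n \<rho> \<in> borel_measurable (PiM {1..n} (\<lambda>i. borel))"
        unfolding gP_def by measurable
    next
      fix \<rho> E E' assume NN: "node_neighbors n E E'"
      have NN': "node_neighbors n E' E" using NN unfolding node_neighbors_def by metis
      show "indist \<epsilon> \<delta> (messages n (gR \<sigma> D) \<rho> E) (messages n (gR \<sigma> D) \<rho> E')"
        unfolding messages_gR
        by (rule indist_gauss[OF _ sp lp sensitivity[OF NN] sensitivity[OF NN'] bd]) simp
    qed
  next
    fix E assume GE: "graph_on n E \<and> max_degree_le n E D"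
    show "expected_abs_error n (return_pmf 0) (gR \<sigma> D) (gP n) E
        \<le> ennreal (32 * (real D * sqrt (real n) + real n) * sqrt (ln (1 / \<delta>)) / \<epsilon>)"
    proof (cases "n = 0")
      case True
      then have "E = {}" using GE unfolding graph_on_def by fastforce
      then show ?thesis using True
        by (simp add: expected_abs_error_def gP_def num_edges_def)
    next
      case False
      then have n: "1 \<le> n" by simp
      have "expected_abs_error n (return_pmf 0) (gR \<sigma> D) (gP n) E
          = (\<integral>\<^sup>+ y. ennreal \<bar>gP n 0 y - real (num_edges E)\<bar> \<partial>messages n (gR \<sigma> D) 0 E)"
        unfolding expected_abs_error_def by simp
      also have "\<dots> \<le> ennreal (2 * exp (1/2) * \<sigma> * sqrt (real n))"
        using GE n sp by (intro accuracy) auto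
      also have "\<dots> \<le> ennreal (32 * (real D * sqrt (real n) + real n) * sqrt (ln (1 / \<delta>)) / \<epsilon>)"
      proof (rule ennreal_leI)
        have ex: "exp (1/2::real) \<le> 2"
        proof -
          have "exp (1/2::real)^2 = exp 1" by (simp add: exp_double[symmetric])
          also have "\<dots> \<le> 2^2" using exp_le by simp
          finally show ?thesis by (rule power2_le_imp_le) simp
        qed
        have sq: "sqrt (real n) \<le> real n"
        proof -
          have "sqrt (real n) * 1 \<le> sqrt (real n) * sqrt (real n)" using n
            by (intro mult_left_mono) auto
          then show ?thesis by simp
        qed
        have pos: "0 \<le> \<sigma> * sqrt (real n)" using sp by simp
        have "2 * exp (1/2) * \<sigma> * sqrt (real n) \<le> 4 * (\<sigma> * sqrt (real n))"
        proof -
          have m: "exp (1/2) * (\<sigma> * sqrt (real n)) \<le> 2 * (\<sigma> * sqrt (real n))"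
            by (rule mult_right_mono[OF ex pos])
          have eq: "2 * exp (1/2) * \<sigma> * sqrt (real n) = 2 * (exp (1/2) * (\<sigma> * sqrt (real n)))"
            by (simp only: mult.assoc)
          show ?thesis unfolding eq using m by linarith
        qed
        also have "\<sigma> * sqrt (real n) = 4 * (K * sqrt (real n)) * sqrt L / \<epsilon>"
          unfolding \<sigma>_def by simp
        also have "K * sqrt (real n) \<le> 2 * (real D * sqrt (real n) + real n)"
        proof -
          have k: "K * sqrt (real n) = real D * sqrt (real n) + real n + sqrt (real n)"
            unfolding K_def by (simp add: algebra_simps)
          have "0 \<le> real D * sqrt (real n)" by simp
          then show ?thesis unfolding k using sq by argo
        qed
        then have "4 * (4 * (K * sqrt (real n)) * sqrt L / \<epsilon>) \<le> 4 * (4 * (2 * (real D * sqrt (real n) + real n)) * sqrt L / \<epsilon>)"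
          using e L by (intro mult_left_mono divide_right_mono mult_right_mono) auto
        also have "\<dots> = 32 * (real D * sqrt (real n) + real n) * sqrt (ln (1 / \<delta>)) / \<epsilon>"
          unfolding L_def by simp
        finally show "2 * exp (1/2) * \<sigma> * sqrt (real n) \<le> 32 * (real D * sqrt (real n) + real n) * sqrt (ln (1 / \<delta>)) / \<epsilon>" .
      qed
      finally show ?thesis .
    qed
  qed
qed

end
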